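(* Let $a_1,a_2,\dots$ be positive integers. For all $n\ge 2$, $Q_n(x)=p_n(x,x+1)$.
   Context: Fix positive integers $a_1,a_2,\dots$. Define polynomials $Q_n(x)\in\mathbb{Z}[x]$ by $Q_0(x)=1$, $Q_1(x)=x+a_1$, and $Q_n(x)=(-1)^{n+1}a_nQ_{n-1}(x)+x(x+1)Q_{n-2}(x)$ for $n\ge 2$. Equivalently, $Q_n(x)$ is the determinant of the $n\times n$ tridiagonal matrix $M_n=(m_{ij})$ defined by: - $m_{11}=x+a_1$ and $m_{kk}=(-1)^{k+1}a_k$ for $k\ge 2$; - $m_{i,i+1}=-(x+1)$ for odd $i$ and $m_{i,i+1}=-x$ for even $i$; - $m_{i,i-1}=x$ for even $i$ and $m_{i,i-1}=x+1$ for odd $i\ge3$; - all other entries $0$. For $n\ge1$, $1\le l\le n$, let $I_{n,l}$ be the set of strictly increasing sequences $(t_1,\dots,t_l)$ in $\{1,\dots,n\}$ with $t_i\equiv n+i-l\pmod 2$ for all $i$. Let $a_{\mathbf t}=a_{t_1}\cdots a_{t_l}$ and $\gamma_n(l)=\sum_{\mathbf t\in I_{n,l}}a_{\mathbf t}$, with $\gamma_n(0)=1$. For $n\ge2$ write $n=2m+r_0$ with $r_0\in\{0,1\}$ and $r_1=1-r_0$, and define $$p_n(x,y)=x^{r_0}\sum_{k=0}^{m}(-1)^{m-k}x^ky^k\gamma_n(n-2k-r_0)+x^{r_1}\sum_{k=0}^{m-r_1}(-1)^{m-k}x^ky^k\gamma_n(n-2k-r_1).$$ *)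

theory Defs
  imports "HOL-Computational_Algebra.Polynomial" "HOL-Number_Theory.Cong"
begin

text \<open>The sequence a is indexed from 1 (a 0 is unused).
  Q a n is the polynomial Q_n(x) in Z[x].\<close>
fun Q :: "(nat \<Rightarrow> int) \<Rightarrow> nat \<Rightarrow> int poly" where
  "Q a 0 = 1"
| "Q a (Suc 0) = [:a 1, 1:]"
| "Q a (Suc (Suc k)) =
     smult ((-1) ^ (k + 3) * a (k + 2)) (Q a (Suc k)) + [:0, 1:] * [:1, 1:] * Q a k"

text \<open>I_{n,l}: strictly increasing sequences (t_1,...,t_l) in {1..n} with
  t_i = n + i - l (mod 2); represented as lists, list index j = i - 1.\<close>
definition I_set :: "nat \<Rightarrow> nat \<Rightarrow> nat list set" where
  "I_set n l = {ts. length ts = l \<and> sorted_wrt (<) ts \<and> set ts \<subseteq> {1..n} \<and>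
      (\<forall>j<l. [int (ts ! j) = int n + int (j + 1) - int l] (mod 2))}"

definition gamma :: "(nat \<Rightarrow> int) \<Rightarrow> nat \<Rightarrow> nat \<Rightarrow> int" where
  "gamma a n l = (if l = 0 then 1 else (\<Sum>ts\<in>I_set n l. \<Prod>t\<leftarrow>ts. a t))"

definition p :: "(nat \<Rightarrow> int) \<Rightarrow> nat \<Rightarrow> 'r::comm_ring_1 \<Rightarrow> 'r \<Rightarrow> 'r" where
  "p a n x y =
    (let m = n div 2; r0 = n mod 2; r1 = 1 - r0 in
      x ^ r0 * (\<Sum>k=0..m. (-1) ^ (m - k) * x ^ k * y ^ k * of_int (gamma a n (n - 2 * k - r0)))
    + x ^ r1 * (\<Sum>k=0..m - r1. (-1) ^ (m - k) * x ^ k * y ^ k * of_int (gamma a n (n - 2 * k - r1))))"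

end

theory Submission
  imports Defs
begin

lemma cong2_iff: "[int a = int n + int b - int c] (mod 2) \<longleftrightarrow> even (a + n + b + c)"
  unfolding cong_def by presburger

lemma I_set_alt: "I_set n l = {ts. length ts = l \<and> sorted_wrt (<) ts \<and> set ts \<subseteq> {1..n} \<and>
      (\<forall>j<l. even (ts ! j + n + (j + 1) + l))}"
  unfolding I_set_def cong2_iff by simp

lemma I_set_finite: "finite (I_set n l)"
proof -
  have "I_set n l \<subseteq> {ts. set ts \<subseteq> {1..n} \<and> length ts = l}" by (auto simp: I_set_alt)
  moreover have "finite {ts. set ts \<subseteq> {1..n} \<and> length ts = l}"
    by (rule finite_lists_length_eq) simp
  ultimately show ?thesis by (rule finite_subset)
qed

lemma I_set_0: "I_set n 0 = {[]}"
  by (auto simp: I_set_alt)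

lemma sorted_len: "sorted_wrt (<) ts \<Longrightarrow> set ts \<subseteq> {1..n} \<Longrightarrow> length ts \<le> n"
proof -
  assume a: "sorted_wrt (<) ts" "set ts \<subseteq> {1..n}"
  have "distinct ts" using a(1) by (simp add: strict_sorted_iff)
  then have "length ts = card (set ts)" by (simp add: distinct_card)
  also have "\<dots> \<le> card {1..n}" using a(2) by (intro card_mono) auto
  finally show ?thesis by simp
qed

lemma I_set_big: "l > n \<Longrightarrow> I_set n l = {}"
  using sorted_len by (fastforce simp: I_set_alt)

lemma gamma_alt: "gamma a n l = (\<Sum>ts\<in>I_set n l. \<Prod>t\<leftarrow>ts. a t)"
  by (simp add: gamma_def I_set_0)

lemma gamma_big: "l > n \<Longrightarrow> gamma a n l = 0"
  by (simp add: gamma_alt I_set_big)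

lemma I_set_1_1: "I_set 1 1 = {[1]}"
proof -
  have "ts \<in> I_set 1 1 \<Longrightarrow> ts = [1]" for ts
    by (cases ts) (auto simp: I_set_alt)
  moreover have "[1] \<in> I_set 1 1" by (auto simp: I_set_alt)
  ultimately show ?thesis by blast
qed

lemma I_set_rec:
  "I_set (Suc (Suc n)) (Suc k) = (\<lambda>ts. ts @ [Suc (Suc n)]) ` I_set (Suc n) k \<union> I_set n (Suc k)"
proof (intro equalityI subsetI)
  fix ts assume ts: "ts \<in> I_set (Suc (Suc n)) (Suc k)"
  then have "ts \<noteq> []" by (auto simp: I_set_alt)
  then obtain xs t where tsd: "ts = xs @ [t]" by (metis rev_exhaust)
  from ts have len: "length xs = k" and srt: "sorted_wrt (<) xs" and lt: "\<forall>x\<in>set xs. x < t"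
    and st: "set xs \<subseteq> {1..Suc (Suc n)}" "t \<in> {1..Suc (Suc n)}"
    and par: "\<forall>j<Suc k. even ((xs @ [t]) ! j + Suc (Suc n) + (j + 1) + Suc k)"
    by (auto simp: I_set_alt tsd sorted_wrt_append)
  have pt: "even (t + n)" using par[rule_format, of k] len by (auto simp: nth_append)
  have parx: "even (xs ! j + n + j + k)" if "j < k" for j
    using par[rule_format, of j] that len by (simp add: nth_append)
  show "ts \<in> (\<lambda>ts. ts @ [Suc (Suc n)]) ` I_set (Suc n) k \<union> I_set n (Suc k)"
  proof (cases "t = Suc (Suc n)")
    case True
    have "xs \<in> I_set (Suc n) k"
      unfolding I_set_alt using len srt lt st True parx
      by (auto simp: less_Suc_eq_le)
    then show ?thesis using True tsd by blast
  next
    case False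
    then have tn: "t \<le> n" using st pt by auto presburger+
    have "ts \<in> I_set n (Suc k)"
      unfolding I_set_alt tsd using len srt lt st tn par
      by (auto simp: sorted_wrt_append; fastforce)
    then show ?thesis by blast
  qed
next
  fix ts assume "ts \<in> (\<lambda>ts. ts @ [Suc (Suc n)]) ` I_set (Suc n) k \<union> I_set n (Suc k)"
  then show "ts \<in> I_set (Suc (Suc n)) (Suc k)"
  proof
    assume "ts \<in> (\<lambda>ts. ts @ [Suc (Suc n)]) ` I_set (Suc n) k"
    then obtain xs where xs: "xs \<in> I_set (Suc n) k" and tsd: "ts = xs @ [Suc (Suc n)]" by blast
    from xs have len: "length xs = k" and srt: "sorted_wrt (<) xs"
      and st: "set xs \<subseteq> {1..Suc n}" and par: "\<forall>j<k. even (xs ! j + Suc n + (j + 1) + k)"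
      by (auto simp: I_set_alt)
    have "\<forall>j<Suc k. even ((xs @ [Suc (Suc n)]) ! j + Suc (Suc n) + (j + 1) + Suc k)"
    proof (intro allI impI)
      fix j assume "j < Suc k"
      then consider "j < k" | "j = k" by linarith
      then show "even ((xs @ [Suc (Suc n)]) ! j + Suc (Suc n) + (j + 1) + Suc k)"
      proof cases
        case 1 then show ?thesis using par len by (simp add: nth_append)
      next
        case 2 then show ?thesis using len by (simp add: nth_append)
      qed
    qed
    then show ?thesis using len srt st unfolding tsd I_set_alt
      by (auto simp: sorted_wrt_append)
  next
    assume "ts \<in> I_set n (Suc k)"
    then show ?thesis by (auto simp: I_set_alt)
  qed
qed

lemma gamma_rec:
  "gamma a (Suc (Suc n)) (Suc k) = a (Suc (Suc n)) * gamma a (Suc n) k + gamma a n (Suc k)"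
proof -
  have disj: "(\<lambda>ts. ts @ [Suc (Suc n)]) ` I_set (Suc n) k \<inter> I_set n (Suc k) = {}"
    by (auto simp: I_set_alt)
  have inj: "inj_on (\<lambda>ts. ts @ [Suc (Suc n)]) (I_set (Suc n) k)"
    by (auto simp: inj_on_def)
  have "gamma a (Suc (Suc n)) (Suc k) =
     (\<Sum>ts\<in>(\<lambda>ts. ts @ [Suc (Suc n)]) ` I_set (Suc n) k. \<Prod>t\<leftarrow>ts. a t) + (\<Sum>ts\<in>I_set n (Suc k). \<Prod>t\<leftarrow>ts. a t)"
    unfolding gamma_alt I_set_rec
    by (rule sum.union_disjoint) (auto simp: I_set_finite disj)
  also have "(\<Sum>ts\<in>(\<lambda>ts. ts @ [Suc (Suc n)]) ` I_set (Suc n) k. \<Prod>t\<leftarrow>ts. a t)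
      = (\<Sum>ts\<in>I_set (Suc n) k. (\<Prod>t\<leftarrow>ts. a t) * a (Suc (Suc n)))"
    by (subst sum.reindex[OF inj]) simp
  finally show ?thesis by (simp add: gamma_alt sum_distrib_left mult.commute)
qed


definition sg :: "nat \<Rightarrow> nat \<Rightarrow> int" where
  "sg n l = (-1) ^ (l div 2 + (if odd l \<and> even n then 1 else 0))"

abbreviation "XX \<equiv> [:0, 1:] :: int poly"
abbreviation "YY \<equiv> [:1, 1:] :: int poly"

definition T :: "(nat \<Rightarrow> int) \<Rightarrow> nat \<Rightarrow> nat \<Rightarrow> int poly" where
  "T a n l = of_int (sg n l) * XX ^ ((n - l + 1) div 2) * YY ^ ((n - l) div 2) * of_int (gamma a n l)"

definition R :: "(nat \<Rightarrow> int) \<Rightarrow> nat \<Rightarrow> int poly" where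
  "R a n = (\<Sum>l\<le>n. T a n l)"

lemma sg_2: "sg (Suc (Suc n)) l = sg n l"
  by (simp add: sg_def)

lemma sg_Suc: "sg (Suc (Suc n)) (Suc k) = (-1) ^ (n + 3) * sg (Suc n) k"
  by (cases "even k"; cases "even n") (auto simp: sg_def power_add elim!: evenE oddE)

lemma sm: "smult c q = of_int c * (q::int poly)"
  by (simp add: of_int_poly)

lemma R_rec: "R a (Suc (Suc n)) = smult ((-1) ^ (n + 3) * a (n + 2)) (R a (Suc n)) + XX * YY * R a n"
proof -
  define U where "U l = of_int (sg (Suc (Suc n)) l) * XX ^ ((Suc (Suc n) - l + 1) div 2)
       * YY ^ ((Suc (Suc n) - l) div 2) * of_int (gamma a n l)" for l
  have T0: "T a (Suc (Suc n)) 0 = U 0"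
    by (simp add: T_def U_def gamma_def)
  have TS: "T a (Suc (Suc n)) (Suc k) = smult ((-1) ^ (n + 3) * a (n + 2)) (T a (Suc n) k) + U (Suc k)" for k
  proof -
    have e1: "(Suc (Suc n) - Suc k + 1) div 2 = (Suc n - k + 1) div 2" by simp
    have e2: "(Suc (Suc n) - Suc k) div 2 = (Suc n - k) div 2" by simp
    show ?thesis unfolding T_def U_def gamma_rec sg_Suc e1 e2 sm
      by (simp add: algebra_simps)
  qed
  have U_small: "U l = XX * YY * T a n l" if "l \<le> n" for l
  proof -
    have e1: "(Suc (Suc n) - l + 1) div 2 = Suc ((n - l + 1) div 2)" using that by simp
    have e2: "(Suc (Suc n) - l) div 2 = Suc ((n - l) div 2)" using that by simp
    show ?thesis unfolding U_def T_def e1 e2 sg_2 by (simp add: algebra_simps)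
  qed
  have U_big: "U l = 0" if "l > n" for l
    using that by (simp add: U_def gamma_big)
  have "R a (Suc (Suc n)) = U 0 + (\<Sum>k\<le>Suc n. T a (Suc (Suc n)) (Suc k))"
    unfolding R_def by (subst sum.atMost_Suc_shift) (simp add: T0)
  also have "\<dots> = smult ((-1) ^ (n + 3) * a (n + 2)) (R a (Suc n)) + (U 0 + (\<Sum>k\<le>Suc n. U (Suc k)))"
    unfolding TS sum.distrib R_def sm by (simp only: sum_distrib_left)
  also have "U 0 + (\<Sum>k\<le>Suc n. U (Suc k)) = (\<Sum>l\<le>Suc (Suc n). U l)"
    by (subst sum.atMost_Suc_shift) simp
  also have "\<dots> = (\<Sum>l\<le>n. U l)"
    using U_big by simp
  also have "\<dots> = XX * YY * R a n"
    unfolding R_def sum_distrib_left using U_small by simp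
  finally show ?thesis .
qed

lemma Q_R: "Q a n = R a n"
proof (induction a n rule: Q.induct)
  case (1 a)
  then show ?case by (simp add: R_def T_def sg_def gamma_def)
next
  case (2 a)
  have g: "gamma a 1 1 = a 1" unfolding gamma_def I_set_1_1 by simp
  have g0: "gamma a 1 0 = 1" by (simp add: gamma_def)
  show ?case using g g0 by (simp add: R_def T_def sg_def of_int_poly)
next
  case (3 a k)
  then show ?case by (simp add: R_rec)
qed


lemma sum_even_odd: "(\<Sum>l<2*(N::nat). (f::nat\<Rightarrow>'a::comm_monoid_add) l) = (\<Sum>j<N. f (2*j)) + (\<Sum>j<N. f (2*j+1))"
  by (induction N) (simp_all add: algebra_simps)

lemma p_even:
  assumes "m \<ge> 1"
  shows "p a (2*m) XX YY = R a (2*m)"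
proof -
  have pe: "p a (2*m) XX YY =
     (\<Sum>k=0..m. (-1)^(m-k) * XX^k * YY^k * of_int (gamma a (2*m) (2*m - 2*k)))
     + XX * (\<Sum>k=0..m-1. (-1)^(m-k) * XX^k * YY^k * of_int (gamma a (2*m) (2*m - 2*k - 1)))"
    by (simp add: p_def Let_def)
  have s1: "(\<Sum>k=0..m. (-1)^(m-k) * XX^k * YY^k * of_int (gamma a (2*m) (2*m - 2*k)))
      = (\<Sum>j\<le>m. T a (2*m) (2*j))"
    apply (subst sum.atLeastAtMost_rev)
    unfolding atLeast0AtMost
  proof (rule sum.cong)
    fix j assume "j \<in> {..m}"
    then obtain d where md: "m = j + d" using le_Suc_ex by auto
    show "(-1)^(m-(m+0-j)) * XX^(m+0-j) * YY^(m+0-j) * of_int (gamma a (2*m) (2*m - 2*(m+0-j)))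
          = T a (2*m) (2*j)"
      unfolding T_def sg_def md by simp
  qed simp
  have s2: "XX * (\<Sum>k=0..m-1. (-1)^(m-k) * XX^k * YY^k * of_int (gamma a (2*m) (2*m - 2*k - 1)))
      = (\<Sum>j<m. T a (2*m) (2*j+1))"
    apply (subst sum.atLeastAtMost_rev)
    unfolding atLeast0AtMost sum_distrib_left
  proof (rule sum.cong)
    show "{..m-1} = {..<m}" using assms by auto
  next
    fix j assume "j \<in> {..<m}"
    then obtain d where md: "m = j + d + 1" using less_imp_Suc_add by fastforce
    show "XX * ((-1)^(m-(m-1+0-j)) * XX^(m-1+0-j) * YY^(m-1+0-j) * of_int (gamma a (2*m) (2*m - 2*(m-1+0-j) - 1)))
          = T a (2*m) (2*j+1)"
      unfolding T_def sg_def md by (simp add: algebra_simps)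
  qed
  have "R a (2*m) = (\<Sum>l<2*m. T a (2*m) l) + T a (2*m) (2*m)"
    unfolding R_def by (simp add: lessThan_Suc_atMost[symmetric])
  also have "\<dots> = (\<Sum>j\<le>m. T a (2*m) (2*j)) + (\<Sum>j<m. T a (2*m) (2*j+1))"
    unfolding sum_even_odd by (simp add: lessThan_Suc_atMost[symmetric])
  finally show ?thesis using pe s1 s2 by simp
qed

lemma p_odd:
  shows "p a (2*m+1) XX YY = R a (2*m+1)"
proof -
  have pe: "p a (2*m+1) XX YY =
     XX * (\<Sum>k=0..m. (-1)^(m-k) * XX^k * YY^k * of_int (gamma a (2*m+1) (2*m + 1 - 2*k - 1)))
     + (\<Sum>k=0..m. (-1)^(m-k) * XX^k * YY^k * of_int (gamma a (2*m+1) (2*m + 1 - 2*k)))"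
    by (simp add: p_def Let_def)
  have s1: "XX * (\<Sum>k=0..m. (-1)^(m-k) * XX^k * YY^k * of_int (gamma a (2*m+1) (2*m + 1 - 2*k - 1)))
      = (\<Sum>j\<le>m. T a (2*m+1) (2*j))"
    apply (subst sum.atLeastAtMost_rev)
    unfolding atLeast0AtMost sum_distrib_left
  proof (rule sum.cong)
    fix j assume "j \<in> {..m}"
    then obtain d where md: "m = j + d" using le_Suc_ex by auto
    show "XX * ((-1)^(m-(m+0-j)) * XX^(m+0-j) * YY^(m+0-j) * of_int (gamma a (2*m+1) (2*m + 1 - 2*(m+0-j) - 1)))
          = T a (2*m+1) (2*j)"
      unfolding T_def sg_def md by (simp add: algebra_simps)
  qed simp
  have s2: "(\<Sum>k=0..m. (-1)^(m-k) * XX^k * YY^k * of_int (gamma a (2*m+1) (2*m + 1 - 2*k)))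
      = (\<Sum>j\<le>m. T a (2*m+1) (2*j+1))"
    apply (subst sum.atLeastAtMost_rev)
    unfolding atLeast0AtMost
  proof (rule sum.cong)
    fix j assume "j \<in> {..m}"
    then obtain d where md: "m = j + d" using le_Suc_ex by auto
    show "(-1)^(m-(m+0-j)) * XX^(m+0-j) * YY^(m+0-j) * of_int (gamma a (2*m+1) (2*m + 1 - 2*(m+0-j)))
          = T a (2*m+1) (2*j+1)"
      unfolding T_def sg_def md by (simp add: algebra_simps)
  qed simp
  have "R a (2*m+1) = (\<Sum>l<2*(m+1). T a (2*m+1) l)"
    unfolding R_def by (simp add: lessThan_Suc_atMost[symmetric])
  also have "\<dots> = (\<Sum>j<m+1. T a (2*m+1) (2*j)) + (\<Sum>j<m+1. T a (2*m+1) (2*j+1))"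
    by (rule sum_even_odd)
  finally show ?thesis using pe s1 s2 by (simp add: lessThan_Suc_atMost[symmetric])
qed

theorem corollary1:
  fixes a :: "nat \<Rightarrow> int" and n :: nat
  assumes "\<forall>k\<ge>1. a k > 0"
    and "n \<ge> 2"
  shows "Q a n = p a n [:0, 1:] [:1, 1:]"
proof (cases "even n")
  case True
  then obtain m where nm: "n = 2*m" by (elim evenE)
  with assms(2) have "m \<ge> 1" by simp
  then show ?thesis using p_even[of m a] Q_R[of a n] nm by simp
next
  case False
  then obtain m where nm: "n = 2*m+1" by (elim oddE)
  then show ?thesis using p_odd[of a m] Q_R[of a n] by simp
qed

end
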